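(* Let $\varepsilon\in[0,1)$ and $\mathcal{P},\mathcal{E}\subseteq\mathcal{D}(P)$. Then $$\beta C_{\mathrm{GPO},\varepsilon}(\mathcal{P},\mathcal{E})=D_{\max,\varepsilon}(\mathcal{P}\|\mathcal{E}).$$
   Context: All Hilbert spaces are finite-dimensional; $\mathcal{D}(P)$ is the set of density operators on $P$; $T(X,Y)=\tfrac12\|X-Y\|_1$; $\mathcal{B}_\varepsilon(\mathcal{P})=\{\omega\in\mathcal{D}:T(\omega,\rho)\le\varepsilon\text{ for some }\rho\in\mathcal{P}\}$. Battery: qubit $B$ with basis $\{|0\rangle,|1\rangle\}$, $\pi_M=(1-\tfrac1M)|0\rangle\langle0|+\tfrac1M|1\rangle\langle1|$ for $M>1$. The one-shot work cost from a clean battery under a class $\mathfrak{F}$ is $\beta C_{\mathfrak{F},\varepsilon}(\mathcal{P},\mathcal{E})=\log\inf\{M>1:\exists\mathcal{F}\in\mathfrak{F},\ \exists(\rho,\tau)\in\mathcal{P}\times\mathcal{E}\text{ with }T(\mathcal{F}(|1\rangle\langle1|),\rho)\le\varepsilon\text{ and }\mathcal{F}(\pi_M)=\tau\}$. GPO here means the class of CPTP maps from $B$ to $P$, Gibbs preservation being the condition $\mathcal{F}(\pi_M)=\tau$. The smoothed max-relative entropy between sets is $D_{\max,\varepsilon}(\mathcal{P}\|\mathcal{E})=\log\inf\{M>1:\tau\in\mathcal{E},\ \omega\in\mathcal{B}_\varepsilon(\mathcal{P}),\ M\tau-\omega\ge0\}$. *)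

theory Defs
  imports "Jordan_Normal_Form.Matrix" "HOL-Library.Complex_Order" "HOL-Library.Extended_Real"
begin

text \<open>Operators on the n-dimensional system P are complex n x n matrices.\<close>

definition mtrace :: "complex mat \<Rightarrow> complex" where
  "mtrace A = (\<Sum>i<dim_row A. A $$ (i, i))"

definition madj :: "complex mat \<Rightarrow> complex mat" where
  "madj A = mat (dim_col A) (dim_row A) (\<lambda>(i, j). cnj (A $$ (j, i)))"

definition psd :: "complex mat \<Rightarrow> bool" where
  "psd A \<longleftrightarrow> A \<in> carrier_mat (dim_row A) (dim_row A) \<and>
     (\<forall>v \<in> carrier_vec (dim_row A). 0 \<le> conjugate v \<bullet> (A *\<^sub>v v))"

definition density :: "nat \<Rightarrow> complex mat set" where
  "density n = {A. A \<in> carrier_mat n n \<and> psd A \<and> mtrace A = 1}"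

text \<open>Trace norm: trace of |X| = sqrt(X* X), the unique psd square root.\<close>
definition trace_norm :: "complex mat \<Rightarrow> real" where
  "trace_norm X = Re (mtrace (THE S. S \<in> carrier_mat (dim_col X) (dim_col X) \<and> psd S \<and> S * S = madj X * X))"

definition tdist :: "complex mat \<Rightarrow> complex mat \<Rightarrow> real" where
  "tdist X Y = trace_norm (X - Y) / 2"

definition eps_ball :: "nat \<Rightarrow> real \<Rightarrow> complex mat set \<Rightarrow> complex mat set" where
  "eps_ball n \<epsilon> PP = {\<omega> \<in> density n. \<exists>\<rho>\<in>PP. tdist \<omega> \<rho> \<le> \<epsilon>}"

text \<open>(id_k \<otimes> F)(X) for X a (k*m) x (k*m) matrix viewed as k x k blocks of m x m matrices.\<close>
definition ext_map :: "nat \<Rightarrow> nat \<Rightarrow> nat \<Rightarrow> (complex mat \<Rightarrow> complex mat) \<Rightarrow> complex mat \<Rightarrow> complex mat" where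
  "ext_map k m n F X = mat (k * n) (k * n) (\<lambda>(r, c).
      F (mat m m (\<lambda>(a, b). X $$ (m * (r div n) + a, m * (c div n) + b))) $$ (r mod n, c mod n))"

definition cptp :: "nat \<Rightarrow> nat \<Rightarrow> (complex mat \<Rightarrow> complex mat) \<Rightarrow> bool" where
  "cptp m n F \<longleftrightarrow>
     (\<forall>X \<in> carrier_mat m m. F X \<in> carrier_mat n n) \<and>
     (\<forall>X \<in> carrier_mat m m. \<forall>Y \<in> carrier_mat m m. \<forall>a b :: complex.
         F (a \<cdot>\<^sub>m X + b \<cdot>\<^sub>m Y) = a \<cdot>\<^sub>m F X + b \<cdot>\<^sub>m F Y) \<and>
     (\<forall>X \<in> carrier_mat m m. mtrace (F X) = mtrace X) \<and>
     (\<forall>k \<ge> 1. \<forall>X \<in> carrier_mat (k * m) (k * m). psd X \<longrightarrow> psd (ext_map k m n F X))"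

definition ket1 :: "complex mat" where
  "ket1 = mat 2 2 (\<lambda>(i, j). if i = 1 \<and> j = 1 then 1 else 0)"

definition piM :: "real \<Rightarrow> complex mat" where
  "piM M = mat 2 2 (\<lambda>(i, j). if i = 0 \<and> j = 0 then complex_of_real (1 - 1 / M)
                          else if i = 1 \<and> j = 1 then complex_of_real (1 / M) else 0)"

definition log_inf :: "real set \<Rightarrow> ereal" where
  "log_inf S = (if S = {} then \<infinity> else ereal (log 2 (Inf S)))"

definition work_cost_GPO :: "nat \<Rightarrow> real \<Rightarrow> complex mat set \<Rightarrow> complex mat set \<Rightarrow> ereal" where
  "work_cost_GPO n \<epsilon> PP EE = log_inf {M. M > 1 \<and> (\<exists>F. cptp 2 n F \<and>
      (\<exists>\<rho>\<in>PP. \<exists>\<tau>\<in>EE. tdist (F ket1) \<rho> \<le> \<epsilon> \<and> F (piM M) = \<tau>))}"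

definition Dmax_eps :: "nat \<Rightarrow> real \<Rightarrow> complex mat set \<Rightarrow> complex mat set \<Rightarrow> ereal" where
  "Dmax_eps n \<epsilon> PP EE = log_inf {M. M > 1 \<and> (\<exists>\<tau>\<in>EE. \<exists>\<omega>\<in>eps_ball n \<epsilon> PP.
      psd (complex_of_real M \<cdot>\<^sub>m \<tau> - \<omega>))}"

end

theory Submission
  imports Defs
begin

definition qfun :: "nat \<Rightarrow> (nat \<Rightarrow> nat \<Rightarrow> complex) \<Rightarrow> (nat \<Rightarrow> complex) \<Rightarrow> complex" where
  "qfun N S x = (\<Sum>r<N. \<Sum>c<N. cnj (x r) * S r c * x c)"

lemma cge0_iff: "(0::complex) \<le> z \<longleftrightarrow> 0 \<le> Re z \<and> Im z = 0"
  by (simp add: less_eq_complex_def)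

lemma sum_if_const: "(\<Sum>c\<in>A. if P then f c else 0) = (if P then sum f A else 0)"
  by simp

lemma if_conj_split: "(if P \<and> Q then a else 0) = (if P then (if Q then a else 0) else 0)"
  by simp

lemma qfun_delta:
  assumes "i < N"
  shows "qfun N S (\<lambda>j. if j = i then 1 else 0) = S i i"
proof -
  have "qfun N S (\<lambda>j. if j = i then 1 else 0) = (\<Sum>r<N. if r = i then (\<Sum>c<N. if c = i then S r c else 0) else 0)"
  proof -
    have "\<And>r c. cnj (if r = i then 1 else 0) * S r c * (if c = i then 1 else 0) = (if r = i then (if c = i then S r c else 0) else 0)" by simp
    then show ?thesis unfolding qfun_def by (simp only: sum_if_const)
  qed
  also have "\<dots> = S i i" using assms by (simp only: sum.delta finite_lessThan lessThan_iff if_True)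
  finally show ?thesis .
qed

lemma qfun_add_delta:
  assumes "i < N"
  shows "qfun N S (\<lambda>j. x j + (if j = i then t else 0)) =
    qfun N S x + cnj t * (\<Sum>c<N. S i c * x c) + t * (\<Sum>r<N. cnj (x r) * S r i) + cnj t * t * S i i"
proof -
  have e: "cnj (x r + (if r = i then t else 0)) * S r c * (x c + (if c = i then t else 0)) =
     cnj (x r) * S r c * x c + (if r = i then cnj t * S i c * x c else 0)
     + (if c = i then cnj (x r) * S r i * t else 0) + (if r = i \<and> c = i then cnj t * S i i * t else 0)" for r c
    by (auto simp: algebra_simps)
  show ?thesis
    unfolding qfun_def e
    using assms
    apply (simp only: sum.distrib)
    apply (simp only: if_conj_split sum_if_const)
    apply (simp add: sum_distrib_left sum_distrib_right algebra_simps)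
    done
qed

lemma sum_delta_l: "j < (N::nat) \<Longrightarrow> (\<Sum>c<N. f c * (if c = j then 1 else 0)) = (f j :: complex)"
proof -
  assume j: "j < N"
  have "(\<Sum>c<N. f c * (if c = j then 1 else 0)) = (\<Sum>c<N. if c = j then f c else 0)"
    by (intro sum.cong) auto
  also have "\<dots> = f j" using j by (simp only: sum.delta finite_lessThan lessThan_iff if_True)
  finally show ?thesis .
qed

lemma sum_delta_r: "j < (N::nat) \<Longrightarrow> (\<Sum>c<N. cnj (if c = j then 1 else 0) * f c) = (f j :: complex)"
proof -
  assume j: "j < N"
  have "(\<Sum>c<N. cnj (if c = j then 1 else 0) * f c) = (\<Sum>c<N. if c = j then f c else 0)"
    by (intro sum.cong) auto
  also have "\<dots> = f j" using j by (simp only: sum.delta finite_lessThan lessThan_iff if_True)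
  finally show ?thesis .
qed

lemma qfun_two:
  assumes "i < N" "j < N" "j \<noteq> i"
  shows "qfun N S (\<lambda>k. (if k = j then 1 else 0) + (if k = i then t else 0)) =
     S j j + cnj t * S i j + t * S j i + cnj t * t * S i i"
  using qfun_add_delta[OF assms(1), of S "\<lambda>k. if k = j then 1 else 0" t]
  by (simp add: qfun_delta[OF assms(2)] sum_delta_l[OF assms(2)] sum_delta_r[OF assms(2)])

lemma psd_fun_diag:
  assumes P: "\<forall>x. 0 \<le> qfun N S x" and i: "i < N"
  shows "0 \<le> S i i"
  using P qfun_delta[OF i, of S] by metis

lemma psd_fun_herm:
  assumes P: "\<forall>x. 0 \<le> qfun N S x" and r: "r < N" and c: "c < N"
  shows "S c r = cnj (S r c)"
proof (cases "r = c")
  case True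
  then show ?thesis using psd_fun_diag[OF P r] by (simp add: complex_eq_iff less_eq_complex_def)
next
  case False
  have 1: "0 \<le> S r r + cnj 1 * S c r + 1 * S r c + cnj 1 * 1 * S c c"
    using P qfun_two[OF c r False, of S 1] by metis
  have 2: "0 \<le> S r r + cnj \<i> * S c r + \<i> * S r c + cnj \<i> * \<i> * S c c"
    using P qfun_two[OF c r False, of S \<i>] by metis
  have dr: "Im (S r r) = 0" "Im (S c c) = 0" using psd_fun_diag[OF P r] psd_fun_diag[OF P c]
    by (auto simp: less_eq_complex_def)
  have a: "Im (S c r) + Im (S r c) = 0" using 1 dr by (simp add: less_eq_complex_def)
  have b: "Re (S r c) - Re (S c r) = 0" using 2 dr by (simp add: less_eq_complex_def)
  show ?thesis using a b by (simp add: complex_eq_iff)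
qed

lemma psd_fun_zero:
  assumes P: "\<forall>x. 0 \<le> qfun N S x" and i: "i < N" and j: "j < N" and z: "S i i = 0"
  shows "S i j = 0"
proof (rule ccontr)
  assume nz: "S i j \<noteq> 0"
  hence ji: "j \<noteq> i" using z by auto
  define a where "a = S i j"
  define u where "u = (Re (S j j) + 1) / (2 * (cmod a)^2)"
  have a0: "cmod a > 0" using nz a_def by auto
  have h: "S j i = cnj a" using psd_fun_herm[OF P i j] a_def by simp
  define t where "t = - complex_of_real u * a"
  have q: "0 \<le> S j j + cnj t * a + t * cnj a + cnj t * t * 0"
    using P qfun_two[OF i j ji, of S t] h z a_def by metis
  have ra: "Re (a * cnj a) = (cmod a)^2" using cmod_power2[of a] by (simp add: power2_eq_square)
  have "cnj t * a + t * cnj a = - 2 * complex_of_real u * (a * cnj a)"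
    unfolding t_def by (simp add: algebra_simps)
  hence "Re (cnj t * a + t * cnj a) = - 2 * u * (cmod a)^2"
    using ra by simp
  moreover have "2 * u * (cmod a)^2 = Re (S j j) + 1" unfolding u_def using a0 by simp
  ultimately have "Re (S j j + cnj t * a + t * cnj a) = -1" by simp
  with q show False by (simp add: less_eq_complex_def)
qed


lemma psd_fun_step:
  assumes P: "\<forall>x. 0 \<le> qfun N S x" and i: "i < N" and nz: "S i i \<noteq> 0"
  shows "\<forall>x. 0 \<le> qfun N (\<lambda>r c. S r c - S r i * S i c / S i i) x"
proof
  fix x
  define s where "s = S i i"
  define a where "a = (\<Sum>c<N. S i c * x c)"
  define b where "b = (\<Sum>r<N. cnj (x r) * S r i)"
  have cs: "cnj s = s" using psd_fun_herm[OF P i i] s_def by simp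
  have ba: "b = cnj a" unfolding a_def b_def
    by (simp add: psd_fun_herm[OF P i] mult.commute)
  have s0: "s \<noteq> 0" using nz s_def by simp
  have e1: "qfun N (\<lambda>r c. S r c - S r i * S i c / S i i) x = qfun N S x - b * a / s"
  proof -
    have "qfun N (\<lambda>r c. S r c - S r i * S i c / S i i) x =
      qfun N S x - (\<Sum>r<N. \<Sum>c<N. (cnj (x r) * S r i) * (S i c * x c)) / s"
      unfolding qfun_def s_def
      by (simp add: algebra_simps sum_subtractf sum_divide_distrib diff_divide_distrib)
    also have "(\<Sum>r<N. \<Sum>c<N. (cnj (x r) * S r i) * (S i c * x c)) = b * a"
      unfolding a_def b_def by (simp add: sum_product)
    finally show ?thesis .
  qed
  define t where "t = - a / s"
  have e2: "qfun N S (\<lambda>j. x j + (if j = i then t else 0)) = qfun N S x - b * a / s"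
    unfolding qfun_add_delta[OF i] a_def[symmetric] b_def[symmetric] s_def[symmetric]
    unfolding t_def using cs s0 ba
    by (simp add: field_simps power2_eq_square)
  show "0 \<le> qfun N (\<lambda>r c. S r c - S r i * S i c / S i i) x"
    using e1 e2 P by metis
qed

lemma gram:
  "\<forall>x. 0 \<le> qfun N S x \<Longrightarrow> \<exists>L w. \<forall>r<N. \<forall>c<N. S r c = (\<Sum>l<(L::nat). w l r * cnj (w l c))"
proof (induction "card {i. i < N \<and> S i i \<noteq> 0}" arbitrary: S rule: less_induct)
  case less
  note P = less.prems
  show ?case
  proof (cases "\<exists>i<N. S i i \<noteq> 0")
    case False
    have "\<forall>r<N. \<forall>c<N. S r c = (\<Sum>l<(0::nat). (\<lambda>_ _. 0) l r * cnj ((\<lambda>_ _. 0) l c))"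
      using psd_fun_zero[OF P] False by auto
    then show ?thesis by (intro exI)
  next
    case True
    then obtain i where i: "i < N" and nz: "S i i \<noteq> 0" by blast
    define S' where "S' = (\<lambda>r c. S r c - S r i * S i c / S i i)"
    have P': "\<forall>x. 0 \<le> qfun N S' x" unfolding S'_def by (rule psd_fun_step[OF P i nz])
    have sub: "{j. j < N \<and> S' j j \<noteq> 0} \<subset> {j. j < N \<and> S j j \<noteq> 0}"
    proof -
      have "{j. j < N \<and> S' j j \<noteq> 0} \<subseteq> {j. j < N \<and> S j j \<noteq> 0} - {i}"
      proof
        fix j assume j: "j \<in> {j. j < N \<and> S' j j \<noteq> 0}"
        hence jN: "j < N" and "S' j j \<noteq> 0" by auto
        show "j \<in> {j. j < N \<and> S j j \<noteq> 0} - {i}"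
        proof (cases "S j j = 0")
          case True
          hence "S j i = 0" using psd_fun_zero[OF P jN i] by simp
          hence "S' j j = 0" unfolding S'_def using True by simp
          with \<open>S' j j \<noteq> 0\<close> show ?thesis by simp
        next
          case False
          have "S' i i = 0" unfolding S'_def using nz by simp
          with \<open>S' j j \<noteq> 0\<close> False jN show ?thesis by auto
        qed
      qed
      moreover have "i \<in> {j. j < N \<and> S j j \<noteq> 0}" using i nz by simp
      ultimately show ?thesis by blast
    qed
    have "card {j. j < N \<and> S' j j \<noteq> 0} < card {j. j < N \<and> S j j \<noteq> 0}"
      by (rule psubset_card_mono[OF _ sub]) simp
    from less.hyps[OF this P'] obtain L w where
      Lw: "\<forall>r<N. \<forall>c<N. S' r c = (\<Sum>l<(L::nat). w l r * cnj (w l c))" by (elim exE)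
    define s where "s = S i i"
    have sge: "0 \<le> s" using psd_fun_diag[OF P i] s_def by simp
    have sreal: "complex_of_real (Re s) = s" using sge by (simp add: complex_eq_iff less_eq_complex_def)
    have sre0: "Re s > 0" using sge nz s_def by (auto simp: less_eq_complex_def complex_eq_iff)
    define v where "v = (\<lambda>r. S r i / complex_of_real (sqrt (Re s)))"
    define w' where "w' = (\<lambda>l. if l = L then v else w l)"
    have vv: "v r * cnj (v c) = S r i * S i c / S i i" if "r < N" "c < N" for r c
    proof -
      define q where "q = complex_of_real (sqrt (Re s))"
      have h: "cnj (S c i) = S i c" using psd_fun_herm[OF P i \<open>c < N\<close>] by simp
      have "q * q = complex_of_real (Re s)" unfolding q_def using sre0 by (simp flip: of_real_mult)
      hence qq: "q * q = S i i" using sreal s_def by simp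
      have cq: "cnj q = q" unfolding q_def by simp
      have "v r * cnj (v c) = S r i / q * (cnj (S c i) / cnj q)" unfolding v_def q_def by simp
      also have "\<dots> = S r i * S i c / (q * q)" unfolding h cq by simp
      finally show ?thesis unfolding qq .
    qed
    have "\<forall>r<N. \<forall>c<N. S r c = (\<Sum>l<Suc L. w' l r * cnj (w' l c))"
    proof (intro allI impI)
      fix r c assume r: "r < N" and c: "c < N"
      have "(\<Sum>l<Suc L. w' l r * cnj (w' l c)) = (\<Sum>l<L. w l r * cnj (w l c)) + v r * cnj (v c)"
        unfolding w'_def by simp
      also have "\<dots> = S' r c + S r i * S i c / S i i" using Lw r c vv[OF r c] by simp
      also have "\<dots> = S r c" unfolding S'_def by simp
      finally show "S r c = (\<Sum>l<Suc L. w' l r * cnj (w' l c))" by simp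
    qed
    then show ?thesis by (intro exI)
  qed
qed

lemma quad_vec:
  assumes A: "A \<in> carrier_mat N N" and v: "v \<in> carrier_vec N"
  shows "conjugate v \<bullet> (A *\<^sub>v v) = qfun N (\<lambda>r c. A $$ (r, c)) (\<lambda>i. v $ i)"
proof -
  have "conjugate v \<bullet> (A *\<^sub>v v) = (\<Sum>r<N. cnj (v $ r) * (\<Sum>c<N. A $$ (r, c) * v $ c))"
    using A v by (simp add: scalar_prod_def row_def atLeast0LessThan)
  also have "\<dots> = qfun N (\<lambda>r c. A $$ (r, c)) (\<lambda>i. v $ i)"
    unfolding qfun_def by (simp add: sum_distrib_left mult.assoc)
  finally show ?thesis .
qed

lemma psd_iff_qfun:
  assumes A: "A \<in> carrier_mat N N"
  shows "psd A \<longleftrightarrow> (\<forall>x. 0 \<le> qfun N (\<lambda>r c. A $$ (r, c)) x)"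
proof
  assume p: "psd A"
  show "\<forall>x. 0 \<le> qfun N (\<lambda>r c. A $$ (r, c)) x"
  proof
    fix x :: "nat \<Rightarrow> complex"
    have v: "vec N x \<in> carrier_vec N" by simp
    have "qfun N (\<lambda>r c. A $$ (r, c)) x = qfun N (\<lambda>r c. A $$ (r, c)) (\<lambda>i. vec N x $ i)"
      unfolding qfun_def by (intro sum.cong refl) simp
    also have "\<dots> = conjugate (vec N x) \<bullet> (A *\<^sub>v vec N x)" using quad_vec[OF A v] by simp
    finally show "0 \<le> qfun N (\<lambda>r c. A $$ (r, c)) x"
      using p A v unfolding psd_def by auto
  qed
next
  assume q: "\<forall>x. 0 \<le> qfun N (\<lambda>r c. A $$ (r, c)) x"
  show "psd A" unfolding psd_def using A q quad_vec[OF A] by auto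
qed


lemma prod3: "cnj (sum z A) * t * sum z B = (\<Sum>r\<in>A. \<Sum>c\<in>B. cnj (z r) * t * (z c :: complex))"
  by (simp add: sum_distrib_right sum_distrib_left) (rule sum.swap)

lemma regroup:
  fixes z :: "nat \<Rightarrow> complex"
  assumes g: "\<forall>r<N. g r < K"
  shows "(\<Sum>r<N. \<Sum>c<N. cnj (z r) * T (g r) (g c) * z c) =
    qfun K T (\<lambda>a. \<Sum>r\<in>{r. r < N \<and> g r = a}. z r)"
proof -
  have gi: "g ` {..<N} \<subseteq> {..<K}" using g by auto
  have inner: "(\<Sum>b<K. \<Sum>c\<in>{c. c \<in> {..<N} \<and> g c = b}. cnj (z r) * T (g r) (g c) * z c)
      = (\<Sum>c<N. cnj (z r) * T (g r) (g c) * z c)" for r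
    by (rule sum.group[OF finite_lessThan finite_lessThan gi])
  have "qfun K T (\<lambda>a. \<Sum>r\<in>{r. r < N \<and> g r = a}. z r)
     = (\<Sum>a<K. \<Sum>b<K. \<Sum>r\<in>{r. r \<in> {..<N} \<and> g r = a}. \<Sum>c\<in>{c. c \<in> {..<N} \<and> g c = b}.
          cnj (z r) * T a b * z c)"
    unfolding qfun_def prod3 by simp
  also have "\<dots> = (\<Sum>a<K. \<Sum>r\<in>{r. r \<in> {..<N} \<and> g r = a}. \<Sum>b<K. \<Sum>c\<in>{c. c \<in> {..<N} \<and> g c = b}.
          cnj (z r) * T (g r) (g c) * z c)"
    by (subst sum.swap) (intro sum.cong refl, auto)
  also have "\<dots> = (\<Sum>a<K. \<Sum>r\<in>{r. r \<in> {..<N} \<and> g r = a}. \<Sum>c<N. cnj (z r) * T (g r) (g c) * z c)"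
    by (simp only: inner)
  also have "\<dots> = (\<Sum>r<N. \<Sum>c<N. cnj (z r) * T (g r) (g c) * z c)"
    by (rule sum.group[OF finite_lessThan finite_lessThan gi])
  finally show ?thesis by simp
qed

lemma ext1:
  assumes X: "X \<in> carrier_mat m m" and FX: "F X \<in> carrier_mat n n"
  shows "ext_map 1 m n F X = F X"
proof -
  have Xe: "mat m m (($$) X) = X"
    using X by (intro eq_matI) auto
  show ?thesis
    unfolding ext_map_def using FX by (intro eq_matI) (auto simp: Xe)
qed

lemma cptp_psd:
  assumes F: "cptp m n F" and X: "X \<in> carrier_mat m m" and p: "psd X"
  shows "psd (F X)"
proof -
  have FX: "F X \<in> carrier_mat n n" using F X unfolding cptp_def by auto
  have "psd (ext_map 1 m n F X)" using F X p unfolding cptp_def by auto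
  thus ?thesis using ext1[where F=F, OF X FX] by simp
qed

lemma cptp_density:
  assumes F: "cptp m n F" and X: "X \<in> density m"
  shows "F X \<in> density n"
  using F X cptp_psd[OF F] unfolding density_def cptp_def by auto

lemma cnj_mult_self_ge0: "0 \<le> cnj a * (a::complex)"
  by (simp add: less_eq_complex_def)

lemma two_set: "{..<2::nat} = {0, 1}" by auto

lemma ket1_carrier: "ket1 \<in> carrier_mat 2 2" unfolding ket1_def by simp
lemma piM_carrier: "piM M \<in> carrier_mat 2 2" unfolding piM_def by simp

lemma ket1_density: "ket1 \<in> density 2"
proof -
  have "psd ket1"
    unfolding psd_iff_qfun[OF ket1_carrier]
    by (simp add: qfun_def two_set ket1_def cnj_mult_self_ge0)
  moreover have "mtrace ket1 = 1" unfolding mtrace_def ket1_def by (simp add: two_set)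
  ultimately show ?thesis unfolding density_def using ket1_carrier by simp
qed

lemma dir1:
  assumes M: "M > 1" and F: "cptp 2 n F" and tau: "F (piM M) = \<tau>"
  shows "psd (complex_of_real M \<cdot>\<^sub>m \<tau> - F ket1)"
proof -
  define D where "D = mat 2 2 (\<lambda>(i, j). if i = 0 \<and> j = 0 then complex_of_real (M - 1) else 0)"
  have Dc: "D \<in> carrier_mat 2 2" unfolding D_def by simp
  have "\<forall>x. 0 \<le> qfun 2 (\<lambda>r c. D $$ (r, c)) x"
  proof -
    have h: "0 \<le> a * (M - 1) * a" for a :: real
    proof -
      have "0 \<le> (M - 1) * (a * a)" using M by (simp add: mult_nonneg_nonneg)
      thus ?thesis by (metis mult.commute mult.assoc)
    qed
    show ?thesis by (simp add: qfun_def two_set D_def less_eq_complex_def h add_nonneg_nonneg)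
  qed
  hence "psd D" using psd_iff_qfun[OF Dc] by simp
  hence pFD: "psd (F D)" by (rule cptp_psd[OF F Dc])
  have D: "D = complex_of_real M \<cdot>\<^sub>m piM M + (-1) \<cdot>\<^sub>m ket1"
    using M unfolding D_def piM_def ket1_def
    by (intro eq_matI) (auto simp: field_simps two_set less_Suc_eq)
  have FD: "F D = complex_of_real M \<cdot>\<^sub>m F (piM M) + (-1) \<cdot>\<^sub>m F ket1"
    using F piM_carrier ket1_carrier unfolding D cptp_def by blast
  have c1: "F (piM M) \<in> carrier_mat n n" "F ket1 \<in> carrier_mat n n"
    using F piM_carrier ket1_carrier unfolding cptp_def by auto
  have "F D = complex_of_real M \<cdot>\<^sub>m \<tau> - F ket1"
    unfolding FD tau[symmetric] using c1 by (intro eq_matI) auto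
  thus ?thesis using pFD by simp
qed

lemma div_bound: "r < k * n \<Longrightarrow> r div n < (k::nat)"
  by (simp add: less_mult_imp_div_less)

lemma cp_lemma:
  assumes sig: "\<sigma> \<in> carrier_mat n n" "psd \<sigma>" and om: "\<omega> \<in> carrier_mat n n" "psd \<omega>"
    and X: "X \<in> carrier_mat (k * 2) (k * 2)" "psd X"
  shows "psd (ext_map k 2 n (\<lambda>Y. Y $$ (0, 0) \<cdot>\<^sub>m \<sigma> + Y $$ (1, 1) \<cdot>\<^sub>m \<omega>) X)"
proof -
  let ?E = "ext_map k 2 n (\<lambda>Y. Y $$ (0, 0) \<cdot>\<^sub>m \<sigma> + Y $$ (1, 1) \<cdot>\<^sub>m \<omega>) X"
  have Ec: "?E \<in> carrier_mat (k * n) (k * n)" unfolding ext_map_def by simp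
  obtain L1 w1 where w1: "\<forall>r<n. \<forall>c<n. \<sigma> $$ (r, c) = (\<Sum>l<(L1::nat). w1 l r * cnj (w1 l c))"
    using gram[of n "\<lambda>r c. \<sigma> $$ (r, c)"] psd_iff_qfun[OF sig(1)] sig(2) by (auto elim!: exE)
  obtain L2 w2 where w2: "\<forall>r<n. \<forall>c<n. \<omega> $$ (r, c) = (\<Sum>l<(L2::nat). w2 l r * cnj (w2 l c))"
    using gram[of n "\<lambda>r c. \<omega> $$ (r, c)"] psd_iff_qfun[OF om(1)] om(2) by (auto elim!: exE)
  have PX: "\<forall>y. 0 \<le> qfun (k * 2) (\<lambda>a b. X $$ (a, b)) y" using psd_iff_qfun[OF X(1)] X(2) by simp
  define g0 where "g0 = (\<lambda>r::nat. 2 * (r div n))"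
  define g1 where "g1 = (\<lambda>r::nat. 2 * (r div n) + 1)"
  have g0b: "\<forall>r<k * n. g0 r < k * 2" unfolding g0_def using div_bound by fastforce
  have g1b: "\<forall>r<k * n. g1 r < k * 2" unfolding g1_def using div_bound by fastforce
  show ?thesis unfolding psd_iff_qfun[OF Ec]
  proof
    fix x :: "nat \<Rightarrow> complex"
    define z1 where "z1 = (\<lambda>l r. x r * cnj (w1 l (r mod n)))"
    define z2 where "z2 = (\<lambda>l r. x r * cnj (w2 l (r mod n)))"
    let ?X = "\<lambda>a b. X $$ (a, b)"
    have entry: "cnj (x r) * ?E $$ (r, c) * x c =
        (\<Sum>l<L1. cnj (z1 l r) * ?X (g0 r) (g0 c) * z1 l c) +
        (\<Sum>l<L2. cnj (z2 l r) * ?X (g1 r) (g1 c) * z2 l c)"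
      if r: "r < k * n" and c: "c < k * n" for r c
    proof -
      have n0: "n > 0" using r by (cases n) auto
      have rm: "r mod n < n" "c mod n < n" using n0 by auto
      have "?E $$ (r, c) = X $$ (g0 r, g0 c) * \<sigma> $$ (r mod n, c mod n) + X $$ (g1 r, g1 c) * \<omega> $$ (r mod n, c mod n)"
        unfolding ext_map_def g0_def g1_def using r c rm sig(1) om(1) by simp
      also have "\<dots> = X $$ (g0 r, g0 c) * (\<Sum>l<L1. w1 l (r mod n) * cnj (w1 l (c mod n)))
          + X $$ (g1 r, g1 c) * (\<Sum>l<L2. w2 l (r mod n) * cnj (w2 l (c mod n)))"
        using w1 w2 rm by simp
      finally show ?thesis unfolding z1_def z2_def
        by (simp add: sum_distrib_left sum_distrib_right algebra_simps)
    qed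
    have swap3: "(\<Sum>r<N. \<Sum>c<N. \<Sum>l<L. f l r c) = (\<Sum>l<L. \<Sum>r<N. \<Sum>c<N. f l r c)"
      for N L :: nat and f :: "nat \<Rightarrow> nat \<Rightarrow> nat \<Rightarrow> complex"
    proof -
      have "(\<Sum>r<N. \<Sum>c<N. \<Sum>l<L. f l r c) = (\<Sum>r<N. \<Sum>l<L. \<Sum>c<N. f l r c)"
        by (intro sum.cong refl sum.swap)
      also have "\<dots> = (\<Sum>l<L. \<Sum>r<N. \<Sum>c<N. f l r c)" by (rule sum.swap)
      finally show ?thesis .
    qed
    have "qfun (k * n) (\<lambda>r c. ?E $$ (r, c)) x =
      (\<Sum>r<k * n. \<Sum>c<k * n. (\<Sum>l<L1. cnj (z1 l r) * ?X (g0 r) (g0 c) * z1 l c) +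
        (\<Sum>l<L2. cnj (z2 l r) * ?X (g1 r) (g1 c) * z2 l c))"
      unfolding qfun_def by (intro sum.cong refl, rule entry) auto
    also have "\<dots> = (\<Sum>l<L1. \<Sum>r<k * n. \<Sum>c<k * n. cnj (z1 l r) * ?X (g0 r) (g0 c) * z1 l c)
        + (\<Sum>l<L2. \<Sum>r<k * n. \<Sum>c<k * n. cnj (z2 l r) * ?X (g1 r) (g1 c) * z2 l c)"
      by (simp only: sum.distrib swap3)
    also have "\<dots> = (\<Sum>l<L1. qfun (k * 2) ?X (\<lambda>a. \<Sum>r\<in>{r. r < k * n \<and> g0 r = a}. z1 l r))
        + (\<Sum>l<L2. qfun (k * 2) ?X (\<lambda>a. \<Sum>r\<in>{r. r < k * n \<and> g1 r = a}. z2 l r))"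
      by (simp only: regroup[OF g0b, where T="\<lambda>a b. X $$ (a, b)"] regroup[OF g1b, where T="\<lambda>a b. X $$ (a, b)"])
    finally show "0 \<le> qfun (k * n) (\<lambda>r c. ?E $$ (r, c)) x"
      using PX by (simp add: sum_nonneg add_nonneg_nonneg)
  qed
qed

lemma qfun_scale: "qfun N (\<lambda>r c. a * S r c) x = a * qfun N S x"
  unfolding qfun_def by (simp add: sum_distrib_left algebra_simps)

lemma dir2:
  assumes M: "M > 1" and tau: "\<tau> \<in> density n" and om: "\<omega> \<in> density n"
    and p: "psd (complex_of_real M \<cdot>\<^sub>m \<tau> - \<omega>)"
  shows "\<exists>F. cptp 2 n F \<and> F ket1 = \<omega> \<and> F (piM M) = \<tau>"
proof -
  have tc: "\<tau> \<in> carrier_mat n n" and oc: "\<omega> \<in> carrier_mat n n" and po: "psd \<omega>"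
    and trt: "mtrace \<tau> = 1" and tro: "mtrace \<omega> = 1"
    using tau om unfolding density_def by auto
  define c where "c = complex_of_real (1 / (M - 1))"
  define \<sigma> where "\<sigma> = c \<cdot>\<^sub>m (complex_of_real M \<cdot>\<^sub>m \<tau> - \<omega>)"
  have Dc: "complex_of_real M \<cdot>\<^sub>m \<tau> - \<omega> \<in> carrier_mat n n" using oc by (rule minus_carrier_mat)
  have sc: "\<sigma> \<in> carrier_mat n n" unfolding \<sigma>_def using Dc by simp
  have ps: "psd \<sigma>"
  proof -
    have "\<forall>x. 0 \<le> qfun n (\<lambda>r c. (complex_of_real M \<cdot>\<^sub>m \<tau> - \<omega>) $$ (r, c)) x"
      using p psd_iff_qfun[OF Dc] by simp
    moreover have "0 \<le> c" unfolding c_def using M by (simp add: less_eq_complex_def)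
    moreover have "qfun n (\<lambda>r c'. \<sigma> $$ (r, c')) x = c * qfun n (\<lambda>r c. (complex_of_real M \<cdot>\<^sub>m \<tau> - \<omega>) $$ (r, c)) x" for x
    proof -
      have "qfun n (\<lambda>r c'. \<sigma> $$ (r, c')) x = qfun n (\<lambda>r c'. c * (complex_of_real M \<cdot>\<^sub>m \<tau> - \<omega>) $$ (r, c')) x"
        unfolding qfun_def \<sigma>_def using Dc tc oc by (intro sum.cong refl) auto
      thus ?thesis by (simp only: qfun_scale)
    qed
    ultimately show ?thesis using psd_iff_qfun[OF sc] by (simp add: mult_nonneg_nonneg)
  qed
  have trs: "mtrace \<sigma> = 1"
  proof -
    have "mtrace \<sigma> = (\<Sum>i<n. c * (complex_of_real M * \<tau> $$ (i, i) - \<omega> $$ (i, i)))"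
      unfolding mtrace_def \<sigma>_def using tc oc by (intro sum.cong) auto
    also have "\<dots> = c * (complex_of_real M * mtrace \<tau> - mtrace \<omega>)"
      unfolding mtrace_def using tc oc by (simp add: sum_distrib_left sum_subtractf algebra_simps)
    also have "\<dots> = 1" unfolding trt tro c_def using M by (simp add: field_simps)
    finally show ?thesis .
  qed
  define F where "F = (\<lambda>Y::complex mat. Y $$ (0, 0) \<cdot>\<^sub>m \<sigma> + Y $$ (1, 1) \<cdot>\<^sub>m \<omega>)"
  have Fc: "F Y \<in> carrier_mat n n" for Y unfolding F_def using sc oc by simp
  have "cptp 2 n F"
    unfolding cptp_def
  proof (intro conjI ballI allI impI)
    fix X :: "complex mat" assume "X \<in> carrier_mat 2 2" thus "F X \<in> carrier_mat n n" using Fc by simp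
  next
    fix X Y :: "complex mat" and a b :: complex
    assume X: "X \<in> carrier_mat 2 2" and Y: "Y \<in> carrier_mat 2 2"
    show "F (a \<cdot>\<^sub>m X + b \<cdot>\<^sub>m Y) = a \<cdot>\<^sub>m F X + b \<cdot>\<^sub>m F Y"
      unfolding F_def using X Y sc oc by (intro eq_matI) (auto simp: algebra_simps)
  next
    fix X :: "complex mat" assume X: "X \<in> carrier_mat 2 2"
    have "mtrace (F X) = X $$ (0, 0) * mtrace \<sigma> + X $$ (1, 1) * mtrace \<omega>"
      unfolding mtrace_def F_def using sc oc by (simp add: sum.distrib sum_distrib_left)
    also have "\<dots> = X $$ (0, 0) + X $$ (1, 1)" using trs tro by simp
    also have "\<dots> = mtrace X" unfolding mtrace_def using X by (simp add: two_set)
    finally show "mtrace (F X) = mtrace X" .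
  next
    fix k :: nat and X :: "complex mat"
    assume "X \<in> carrier_mat (k * 2) (k * 2)" "psd X"
    thus "psd (ext_map k 2 n F X)" unfolding F_def by (rule cp_lemma[OF sc ps oc po])
  qed
  moreover have "F ket1 = \<omega>" unfolding F_def ket1_def using sc oc by (intro eq_matI) auto
  moreover have "F (piM M) = \<tau>"
  proof -
    have M0: "complex_of_real M \<noteq> 0" "complex_of_real M - 1 \<noteq> 0" using M by auto
    show ?thesis
      unfolding F_def piM_def \<sigma>_def c_def using sc oc tc M0
      by (intro eq_matI) (auto simp: field_simps)
  qed
  ultimately show ?thesis by blast
qed

theorem theorem5:
  fixes n :: nat and \<epsilon> :: real and PP EE :: "complex mat set"
  assumes "0 \<le> \<epsilon>" and "\<epsilon> < 1"
    and "PP \<subseteq> density n" and "EE \<subseteq> density n"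
  shows "work_cost_GPO n \<epsilon> PP EE = Dmax_eps n \<epsilon> PP EE"
proof -
  have "{M. M > 1 \<and> (\<exists>F. cptp 2 n F \<and>
      (\<exists>\<rho>\<in>PP. \<exists>\<tau>\<in>EE. tdist (F ket1) \<rho> \<le> \<epsilon> \<and> F (piM M) = \<tau>))}
    = {M. M > 1 \<and> (\<exists>\<tau>\<in>EE. \<exists>\<omega>\<in>eps_ball n \<epsilon> PP.
      psd (complex_of_real M \<cdot>\<^sub>m \<tau> - \<omega>))}" (is "?A = ?B")
  proof (rule equalityI; rule subsetI)
    fix M assume "M \<in> ?A"
    then obtain F \<rho> \<tau> where M: "M > 1" and F: "cptp 2 n F" and r: "\<rho> \<in> PP" and t: "\<tau> \<in> EE"
      and d: "tdist (F ket1) \<rho> \<le> \<epsilon>" and ft: "F (piM M) = \<tau>" by blast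
    have "F ket1 \<in> eps_ball n \<epsilon> PP"
      unfolding eps_ball_def using cptp_density[OF F ket1_density] r d by blast
    moreover have "psd (complex_of_real M \<cdot>\<^sub>m \<tau> - F ket1)" by (rule dir1[OF M F ft])
    ultimately show "M \<in> ?B" using M t by blast
  next
    fix M assume "M \<in> ?B"
    then obtain \<tau> \<omega> where M: "M > 1" and t: "\<tau> \<in> EE" and w: "\<omega> \<in> eps_ball n \<epsilon> PP"
      and p: "psd (complex_of_real M \<cdot>\<^sub>m \<tau> - \<omega>)" by blast
    from w obtain \<rho> where wd: "\<omega> \<in> density n" and r: "\<rho> \<in> PP" and d: "tdist \<omega> \<rho> \<le> \<epsilon>"
      unfolding eps_ball_def by blast
    have td: "\<tau> \<in> density n" using t assms(4) by blast
    obtain F where F: "cptp 2 n F" "F ket1 = \<omega>" "F (piM M) = \<tau>"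
      using dir2[OF M td wd p] by blast
    show "M \<in> ?A" using M F r t d by blast
  qed
  thus ?thesis unfolding work_cost_GPO_def Dmax_eps_def by simp
qed

end
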